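(* Let $p,q>0$ and $\alpha,\beta,\nu,\gamma\in\mathbb{R}$. Let $f:\mathbb{N}\to[0,\infty)$ be a function with $f(0)=0$, and let $\{|n\rangle\}_{n\in\mathbb{N}}$ be an orthonormal basis of a Hilbert space. Define operators $a,a^{\dagger},N,K$ on the span of this basis by $$a|n\rangle=\sqrt{f(n)}\,|n-1\rangle,\quad a^{\dagger}|n\rangle=\sqrt{f(n+1)}\,|n+1\rangle,\quad N|n\rangle=n|n\rangle,\quad K|n\rangle=(-1)^n|n\rangle$$ (with $a|0\rangle=0$), and let $q^{\alpha N+\beta}$ act by $q^{\alpha N+\beta}|n\rangle=q^{\alpha n+\beta}|n\rangle$. Suppose that these operators satisfy $$aa^{\dagger}-p^{\nu}a^{\dagger}a=(1+2\gamma K)\,q^{\alpha N+\beta}$$ on every basis vector $|n\rangle$. Then for all $n\in\mathbb{N}$, $$f(n)=\begin{cases} q^{\beta}\left(\dfrac{p^{n\nu}-q^{n\alpha}}{p^{\nu}-q^{\alpha}}+2\gamma\,\dfrac{p^{n\nu}-(-1)^{n}q^{n\alpha}}{p^{\nu}+q^{\alpha}}\right), & \text{if } p^{\nu}\neq q^{\alpha},\\[2ex] \left(n+2\gamma\,\dfrac{1-(-1)^{n}}{2}\right)q^{(n-1)\alpha+\beta}, & \text{if } p^{\nu}=q^{\alpha}.\end{cases}$$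
   Context: This is the Fock realization of the $(p,q;\alpha,\beta,\nu;\gamma)$-deformed oscillator algebra, generated by $a,a^{\dagger},N,K$ subject to $aa^{\dagger}-p^{\nu}a^{\dagger}a=(1+2\gamma K)q^{\alpha N+\beta}$, $[N,a]=-a$, $[N,a^{\dagger}]=a^{\dagger}$, $Ka=-aK$, $Ka^{\dagger}=-a^{\dagger}K$, $[N,K]=0$, $N^\dagger=N$, $K^\dagger=K$; the function $f$ is called the structure function of the deformation. Here $\mathbb{N}=\{0,1,2,\dots\}$. *)

theory Defs
  imports Complex_Main
begin

text \<open>Vectors in the span of the orthonormal basis are represented by their
(finitely supported) coefficient sequences nat => real; ket n is the basis vector.\<close>

definition ket :: "nat \<Rightarrow> (nat \<Rightarrow> real)" where
  "ket n = (\<lambda>m. if m = n then 1 else 0)"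

definition ann :: "(nat \<Rightarrow> real) \<Rightarrow> (nat \<Rightarrow> real) \<Rightarrow> (nat \<Rightarrow> real)" where
  "ann f v = (\<lambda>m. sqrt (f (Suc m)) * v (Suc m))"

definition cre :: "(nat \<Rightarrow> real) \<Rightarrow> (nat \<Rightarrow> real) \<Rightarrow> (nat \<Rightarrow> real)" where
  "cre f v = (\<lambda>m. if m = 0 then 0 else sqrt (f m) * v (m - 1))"

definition numop :: "(nat \<Rightarrow> real) \<Rightarrow> (nat \<Rightarrow> real)" where
  "numop v = (\<lambda>m. real m * v m)"

definition Kop :: "(nat \<Rightarrow> real) \<Rightarrow> (nat \<Rightarrow> real)" where
  "Kop v = (\<lambda>m. (-1) ^ m * v m)"

definition qpowop :: "real \<Rightarrow> real \<Rightarrow> real \<Rightarrow> (nat \<Rightarrow> real) \<Rightarrow> (nat \<Rightarrow> real)" where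
  "qpowop q \<alpha> \<beta> v = (\<lambda>m. q powr (\<alpha> * real m + \<beta>) * v m)"

end

theory Submission
  imports Defs
begin

lemma pw: "(x::real) > 0 \<Longrightarrow> x powr (real n * a) = (x powr a) ^ n"
  by (metis mult.commute powr_powr powr_realpow powr_gt_zero)

theorem proposition1:
  fixes p q \<alpha> \<beta> \<nu> \<gamma> :: real and f :: "nat \<Rightarrow> real"
  assumes hp: "p > 0" and hq: "q > 0"
    and fnn: "\<And>n. f n \<ge> 0" and f0: "f 0 = 0"
    and rel: "\<And>n. (\<lambda>m. ann f (cre f (ket n)) m - p powr \<nu> * cre f (ann f (ket n)) m)
                 = (\<lambda>m. qpowop q \<alpha> \<beta> (ket n) m + 2 * \<gamma> * Kop (qpowop q \<alpha> \<beta> (ket n)) m)"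
  shows "\<forall>n. f n =
     (if p powr \<nu> \<noteq> q powr \<alpha> then
        q powr \<beta> * ((p powr (real n * \<nu>) - q powr (real n * \<alpha>)) / (p powr \<nu> - q powr \<alpha>)
          + 2 * \<gamma> * (p powr (real n * \<nu>) - (-1) ^ n * q powr (real n * \<alpha>)) / (p powr \<nu> + q powr \<alpha>))
      else
        (real n + 2 * \<gamma> * (1 - (-1) ^ n) / 2) * q powr ((real n - 1) * \<alpha> + \<beta>))"
proof -
  define P where "P = p powr \<nu>"
  define Q where "Q = q powr \<alpha>"
  define B where "B = q powr \<beta>"
  have PQ: "P > 0" "Q > 0" "B > 0" using hp hq by (auto simp: P_def Q_def B_def)
  have rec: "f (Suc n) - P * f n = Q ^ n * B * (1 + 2 * \<gamma> * (-1) ^ n)" for n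
  proof -
    have "ann f (cre f (ket n)) n - p powr \<nu> * cre f (ann f (ket n)) n
        = qpowop q \<alpha> \<beta> (ket n) n + 2 * \<gamma> * Kop (qpowop q \<alpha> \<beta> (ket n)) n"
      using fun_cong[OF rel[of n], of n] by simp
    moreover have "ann f (cre f (ket n)) n = f (Suc n)"
      using fnn[of "Suc n"] by (simp add: ann_def cre_def ket_def)
    moreover have "cre f (ann f (ket n)) n = f n"
      using fnn[of n] f0 by (cases n) (auto simp: ann_def cre_def ket_def)
    moreover have "q powr (\<alpha> * real n + \<beta>) = Q ^ n * B"
      using pw[OF hq, of n \<alpha>] by (simp add: powr_add Q_def B_def mult.commute)
    ultimately show ?thesis
      by (simp add: qpowop_def Kop_def ket_def P_def algebra_simps)
  qed
  have e1: "p powr (real n * \<nu>) = P ^ n" for n using pw[OF hp] P_def by simp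
  have e2: "q powr (real n * \<alpha>) = Q ^ n" for n using pw[OF hq] Q_def by simp
  show ?thesis
  proof (cases "P = Q")
    case False
    have "f n = B * ((P ^ n - Q ^ n) / (P - Q) + 2 * \<gamma> * (P ^ n - (-1) ^ n * Q ^ n) / (P + Q))" for n
    proof (induction n)
      case 0 then show ?case using f0 by simp
    next
      case (Suc n)
      have "f (Suc n) = P * f n + Q ^ n * B * (1 + 2 * \<gamma> * (-1) ^ n)" using rec[of n] by simp
      also have "\<dots> = B * ((P ^ Suc n - Q ^ Suc n) / (P - Q) + 2 * \<gamma> * (P ^ Suc n - (-1) ^ Suc n * Q ^ Suc n) / (P + Q))"
      proof -
        have n1: "P - Q \<noteq> 0" "P + Q \<noteq> 0" using False PQ by auto
        show ?thesis unfolding Suc using n1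
          by (simp add: divide_simps) (simp add: algebra_simps)
      qed
      finally show ?case .
    qed
    then show ?thesis using False by (simp add: e1 e2 P_def[symmetric] Q_def[symmetric] B_def[symmetric])
  next
    case True
    have "f n = (real n + 2 * \<gamma> * (1 - (-1) ^ n) / 2) * q powr ((real n - 1) * \<alpha> + \<beta>)" for n
    proof (induction n)
      case 0 then show ?case using f0 by simp
    next
      case (Suc n)
      have a: "q powr ((real (Suc n) - 1) * \<alpha> + \<beta>) = Q ^ n * B"
        using pw[OF hq, of n \<alpha>] by (simp add: powr_add Q_def B_def)
      show ?case
      proof (cases n)
        case 0
        then show ?thesis using rec[of 0] f0 a by (simp add: algebra_simps)
      next
        case (Suc k)
        have b: "q powr ((real n - 1) * \<alpha> + \<beta>) = Q ^ k * B"
          using pw[OF hq, of k \<alpha>] Suc by (simp add: powr_add Q_def B_def)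
        have "f (Suc n) = Q * f n + Q ^ n * B * (1 + 2 * \<gamma> * (-1) ^ n)" using rec[of n] True by simp
        also have "\<dots> = (real (Suc n) + 2 * \<gamma> * (1 - (-1) ^ Suc n) / 2) * (Q ^ n * B)"
          unfolding Suc.IH b using Suc by (simp add: algebra_simps) (simp add: field_simps)
        finally show ?thesis using a by simp
      qed
    qed
    then show ?thesis using True by (simp add: P_def Q_def)
  qed
qed

end
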